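(* Let $I=[s,t]\subseteq\mathbb R/\mathbb Z$ be a generalized dyadic interval. Then: (1) there is a decomposition $I=[s,x]\cup[x,t]$ into two generalized dyadic intervals with $x$ red; (2) if at least one of $s,t$ is red, there is a decomposition $I=[s,x]\cup[x,t]$ into two generalized dyadic intervals with $x$ blue.
   Context: Let $\sigma_2(t)=2t$ on $\mathbb R/\mathbb Z$. An interval $I=[s,t]\subseteq\mathbb R/\mathbb Z$ is generalized dyadic if there is an integer $m\ge0$ such that $\sigma_2^m$ maps the open interval $(s,t)$ homeomorphically onto one of $(0,1)$, $(0,\frac23)$, $(\frac13,\frac23)$, $(\frac13,1)$. A point of $\mathbb R/\mathbb Z$ is colored red if some iterate of $\sigma_2$ maps it to $0$, and blue if some iterate maps it into the $2$-cycle $\{\frac13,\frac23\}$; endpoints of generalized dyadic intervals are red or blue. *)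

theory Defs
  imports "HOL-Analysis.Analysis"
begin

text \<open>The circle R/Z is realised as the unit circle in the complex plane via
  x \<mapsto> exp(2 pi i x).  Points are given by real lifts.\<close>

definition circ :: "real \<Rightarrow> complex" where
  "circ x = cis (2 * pi * x)"

text \<open>The doubling map sigma_2 (t \<mapsto> 2t on R/Z) is z \<mapsto> z^2 on the circle.\<close>
definition sigma2 :: "complex \<Rightarrow> complex" where
  "sigma2 z = z ^ 2"

text \<open>The open arc (s,t) of R/Z, for real lifts s < t with t - s \<le> 1
  (the arc traversed in the positive direction from s to t).\<close>
definition open_arc :: "real \<Rightarrow> real \<Rightarrow> complex set" where
  "open_arc s t = circ ` {s<..<t}"

definition gen_dyadic :: "real \<Rightarrow> real \<Rightarrow> bool" where
  "gen_dyadic s t \<longleftrightarrow> s < t \<and> t - s \<le> 1 \<and>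
     (\<exists>m::nat. \<exists>(a, b) \<in> {(0, 1), (0, 2/3), (1/3, 2/3), (1/3, 1::real)}.
        \<exists>g. homeomorphism (open_arc s t) (open_arc a b) (sigma2 ^^ m) g)"

definition red :: "real \<Rightarrow> bool" where
  "red x \<longleftrightarrow> (\<exists>n::nat. (sigma2 ^^ n) (circ x) = circ 0)"

definition blue :: "real \<Rightarrow> bool" where
  "blue x \<longleftrightarrow> (\<exists>n::nat. (sigma2 ^^ n) (circ x) \<in> {circ (1/3), circ (2/3)})"

end

theory Submission
  imports Defs
begin

lemma circ_eq_iff: "circ x = circ y \<longleftrightarrow> (\<exists>n::int. x = y + n)"
proof -
  have "circ x = circ y \<longleftrightarrow> (\<exists>n::int. \<i> * complex_of_real (2*pi*x) = \<i> * complex_of_real (2*pi*y) + (of_int (2 * n) * pi) * \<i>)"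
    unfolding circ_def cis_conv_exp exp_eq by simp
  also have "\<dots> \<longleftrightarrow> (\<exists>n::int. 2*pi*x = 2*pi*y + 2*n*pi)"
    by (simp add: complex_eq_iff)
  also have "\<dots> \<longleftrightarrow> (\<exists>n::int. x = y + n)"
  proof -
    have "(2*pi*x = 2*pi*y + 2*real_of_int n*pi) = (x = y + n)" for n
    proof -
      have "(2*pi*x = 2*pi*y + 2*real_of_int n*pi) = ((2*pi)*x = (2*pi)*(y + n))"
        by (simp add: algebra_simps)
      also have "\<dots> = (x = y + n)" by simp
      finally show ?thesis .
    qed
    then show ?thesis by simp
  qed
  finally show ?thesis .
qed

lemma sigma2_pow: "(sigma2 ^^ m) z = z ^ (2 ^ m)"
  by (induction m arbitrary: z) (auto simp: sigma2_def power_mult[symmetric] power_Suc2 mult.commute)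

lemma sigma2_circ: "(sigma2 ^^ m) (circ x) = circ (2 ^ m * x)"
proof -
  have "(sigma2^^m) (circ x) = cis (2*pi*x) ^ (2^m)" by (simp add: sigma2_pow circ_def)
  also have "\<dots> = cis (real (2^m) * (2*pi*x))" by (rule Complex.DeMoivre)
  also have "\<dots> = circ (2^m*x)" by (simp add: circ_def mult_ac)
  finally show ?thesis .
qed

lemma circ_add_int: "circ (x + of_int n) = circ x"
  using circ_eq_iff by auto

lemma circ_inv: assumes "a < y" "y < a + 1"
  shows "a + 1/2 + Arg (- (circ y / circ a)) / (2*pi) = y"
proof -
  have "- (circ y / circ a) = cis (2*pi*(y-a) - pi)"
    unfolding circ_def cis_divide minus_cis' by (simp add: algebra_simps)
  moreover have "Arg (cis (2*pi*(y-a) - pi)) = 2*pi*(y-a) - pi"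
    by (rule Arg_cis) (use assms pi_gt_zero in auto)
  ultimately show ?thesis by (simp add: field_simps)
qed

lemma circ_not_nonpos: assumes "a < z" "z < a + 1"
  shows "- (circ z / circ a) \<notin> \<real>\<^sub>\<le>\<^sub>0"
proof
  assume h: "- (circ z / circ a) \<in> \<real>\<^sub>\<le>\<^sub>0"
  have e: "- (circ z / circ a) = cis (2*pi*(z-a) - pi)"
    unfolding circ_def cis_divide minus_cis' by (simp add: algebra_simps)
  have "cis (2*pi*(z-a) - pi) \<noteq> 0" by simp
  with h e have "Re (cis (2*pi*(z-a) - pi)) < 0 \<and> Im (cis (2*pi*(z-a) - pi)) = 0"
    by (metis complex_nonpos_Reals_iff complex_eq_iff zero_complex.simps order_le_less)
  then have "Arg (cis (2*pi*(z-a) - pi)) = pi" by (simp add: Arg_eq_pi)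
  moreover have "Arg (cis (2*pi*(z-a) - pi)) = 2*pi*(z-a) - pi"
    by (rule Arg_cis) (use assms pi_gt_zero in auto)
  moreover have "2*pi*(z-a) < 2*pi*1" using assms pi_gt_zero by (intro mult_strict_left_mono) auto
  ultimately show False by linarith
qed

lemma dy_intro:
  assumes st: "s < t" "t - s \<le> 1"
    and ab: "(a, b) \<in> {(0, 1), (0, 2/3), (1/3, 2/3), (1/3, 1::real)}"
    and len: "2^m * (t - s) = b - a" and k: "2^m * s = a + of_int k"
  shows "gen_dyadic s t"
proof -
  have ab1: "a < b" "b \<le> a + 1" using ab by auto
  define f where "f = (sigma2 ^^ m)"
  define g where "g = (\<lambda>w. circ (s + (a + 1/2 + Arg (- (w / circ a)) / (2*pi) - a) / 2^m))"
  have p: "(0::real) < 2^m" by simp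
  have F1: "f (circ y) = circ (2^m * y - k) \<and> a < 2^m * y - k \<and> 2^m * y - k < b"
    if "s < y" "y < t" for y
  proof -
    have "f (circ y) = circ (2^m * y - k)"
      unfolding f_def sigma2_circ using circ_add_int[of "2^m * y - k" k] by simp
    moreover have "a < 2^m * y - k" using mult_strict_left_mono[OF that(1) p] k by linarith
    moreover have "2^m * t = b + k" using len k by (simp add: algebra_simps)
    moreover have "2^m * y - k < b" using mult_strict_left_mono[OF that(2) p] calculation(3)
      by linarith
    ultimately show ?thesis by simp
  qed
  have G1: "g (circ z) = circ (s + (z - a) / 2^m) \<and> s < s + (z - a) / 2^m \<and> s + (z - a) / 2^m < t
      \<and> f (circ (s + (z - a) / 2^m)) = circ z"
    if "a < z" "z < b" for z
  proof -
    have "g (circ z) = circ (s + (z - a) / 2^m)"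
      unfolding g_def using circ_inv[of a z] that ab1 by simp
    moreover have "s < s + (z - a) / 2^m" using that by simp
    moreover have "(z - a) / 2^m < t - s"
      using that len p by (simp add: divide_less_eq mult.commute)
    moreover have "f (circ (s + (z - a) / 2^m)) = circ z"
    proof -
      have "2^m * (s + (z - a) / 2^m) = z + of_int k" using k p by (simp add: field_simps)
      then show ?thesis unfolding f_def sigma2_circ by (simp add: circ_add_int)
    qed
    ultimately show ?thesis by simp
  qed
  have "homeomorphism (open_arc s t) (open_arc a b) f g"
  proof (rule homeomorphismI)
    show "continuous_on (open_arc s t) f"
    proof -
      have "f = (\<lambda>z. z ^ (2^m))" by (simp add: f_def fun_eq_iff sigma2_pow)
      then show ?thesis by (simp add: continuous_on_power continuous_on_id)
    qed
    show "continuous_on (open_arc a b) g"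
      unfolding g_def circ_def[of "s + _"]
    proof (intro continuous_intros)
      fix w assume "w \<in> open_arc a b"
      then obtain z where "a < z" "z < b" "w = circ z" unfolding open_arc_def by auto
      then show "- (w / circ a) \<notin> \<real>\<^sub>\<le>\<^sub>0" using circ_not_nonpos[of a z] ab1 by simp
    qed (auto simp: circ_def)
    show "f ` open_arc s t \<subseteq> open_arc a b"
    proof (rule image_subsetI)
      fix x assume "x \<in> open_arc s t"
      then obtain y where y: "s < y" "y < t" "x = circ y" unfolding open_arc_def by auto
      show "f x \<in> open_arc a b" unfolding open_arc_def y(3) using F1[OF y(1,2)] by auto
    qed
    show "g ` open_arc a b \<subseteq> open_arc s t"
    proof (rule image_subsetI)
      fix x assume "x \<in> open_arc a b"
      then obtain y where y: "a < y" "y < b" "x = circ y" unfolding open_arc_def by auto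
      show "g x \<in> open_arc s t" unfolding open_arc_def y(3) using G1[OF y(1,2)] by auto
    qed
    show "g (f x) = x" if xS: "x \<in> open_arc s t" for x
    proof -
      obtain y where y: "s < y" "y < t" "x = circ y" using xS unfolding open_arc_def by auto
      then have "g (f x) = circ (s + (2^m * y - k - a) / 2^m)" using F1[of y] G1[of "2^m * y - k"] by simp
      also have "s + (2^m * y - k - a) / 2^m = y" using k p by (simp add: field_simps)
      finally show ?thesis using y by simp
    qed
    show "f (g w) = w" if "w \<in> open_arc a b" for w
      using that G1 unfolding open_arc_def by auto
  qed
  then have H: "\<exists>g. homeomorphism (open_arc s t) (open_arc a b) (sigma2^^m) g"
    unfolding f_def by blast
  have "\<exists>p\<in>{(0, 1), (0, 2/3), (1/3, 2/3), (1/3, 1::real)}. case p of (a', b') \<Rightarrow>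
          \<exists>g. homeomorphism (open_arc s t) (open_arc a' b') (sigma2^^m) g"
    by (rule bexI[OF _ ab]) (simp add: H)
  then show ?thesis unfolding gen_dyadic_def using st by blast
qed

lemma mem_arc: "circ y \<in> circ ` {a<..<c} \<longleftrightarrow> (\<exists>n::int. a < y + n \<and> y + n < c)"
proof
  assume "circ y \<in> circ ` {a<..<c}"
  then obtain z where z: "a < z" "z < c" "circ y = circ z" by auto
  then have "circ z = circ y" by simp
  then obtain n :: int where "z = y + n" using circ_eq_iff[of z y] by blast
  then show "\<exists>n::int. a < y + n \<and> y + n < c" using z by blast
next
  assume "\<exists>n::int. a < y + n \<and> y + n < c"
  then obtain n :: int where n: "a < y + n" "y + n < c" by blast
  have "circ y = circ (y + n)" by (simp add: circ_add_int)
  then show "circ y \<in> circ ` {a<..<c}" using n by auto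
qed

lemma arc_eq:
  assumes eq: "circ ` {A<..<A+L} = circ ` {a<..<a+l}" and L: "0 < L" and l: "0 < l" "l \<le> 1"
  shows "L = l \<and> (\<exists>k::int. A = a + k)"
proof -
  have M: "(\<exists>n::int. A < y + n \<and> y + n < A + L) \<longleftrightarrow> (\<exists>n::int. a < y + n \<and> y + n < a + l)" for y
    using eq mem_arc[of y A "A+L"] mem_arc[of y a "a+l"] by simp
  have L1: "L \<le> 1"
  proof (rule ccontr)
    assume "\<not> L \<le> 1"
    define j where "j = \<lfloor>A - a\<rfloor> + 1"
    have "A < a + j" "a + j < A + L" using \<open>\<not> L \<le> 1\<close> unfolding j_def
      by (linarith, linarith)
    then have "\<exists>n::int. A < (a + of_int j) + of_int n \<and> (a + of_int j) + of_int n < A + L"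
      by (intro exI[of _ 0]) simp
    then obtain n :: int where "a < (a + of_int j) + of_int n" "(a + of_int j) + of_int n < a + l"
      using M[of "a + of_int j"] by blast
    then have "real_of_int (j + n) > 0" "real_of_int (j + n) < 1" using l by simp_all
    then have "j + n > 0" "j + n < 1" by simp_all
    then show False by linarith
  qed
  define j where "j = \<lfloor>A - a\<rfloor>"
  define d where "d = A - a - j"
  have d: "0 \<le> d" "d < 1" unfolding d_def j_def by linarith+
  have Aad: "A = a + d + j" unfolding d_def by simp
  have "\<not> (\<exists>n::int. A < A + n \<and> A + n < A + L)"
  proof
    assume "\<exists>n::int. A < A + n \<and> A + n < A + L"
    then obtain n :: int where "A < A + n" "A + n < A + L" by blast
    then have "0 < n" "real_of_int n < L" by simp_all
    then have "real_of_int n \<ge> 1" by simp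
    then show False using L1 \<open>real_of_int n < L\<close> by linarith
  qed
  then have "\<not> (\<exists>n::int. a < A + n \<and> A + n < a + l)" using M[of A] by blast
  then have "\<not> (a < A + of_int (-j) \<and> A + of_int (-j) < a + l)" by blast
  then have nd: "\<not> (0 < d \<and> d < l)" using Aad by simp
  have d0: "d = 0"
  proof (rule ccontr)
    assume "d \<noteq> 0"
    with nd d have dl: "l \<le> d" by linarith
    define e where "e = min L (1 - d) / 2"
    have e: "0 < e" "e < L" "e < 1 - d" unfolding e_def using L d by auto
    have "\<exists>n::int. A < (A + e) + n \<and> (A + e) + n < A + L"
      by (rule exI[of _ 0]) (use e in auto)
    then obtain n :: int where "a < A + e + n" "A + e + n < a + l" using M[of "A+e"] by blast
    then have "0 < d + e + of_int (j + n)" "d + e + of_int (j + n) < l" using Aad by auto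
    moreover have "j + n \<ge> 0 \<or> j + n \<le> -1" by linarith
    then have "real_of_int 0 \<le> real_of_int (j + n) \<or> real_of_int (j + n) \<le> real_of_int (-1)"
      by (simp only: of_int_le_iff)
    then have "real_of_int (j + n) \<ge> 0 \<or> real_of_int (j + n) \<le> -1" by (simp only: of_int_0 of_int_minus of_int_1)
    ultimately show False using dl e d by linarith
  qed
  have Aj: "A = a + j" using Aad d0 by simp
  have "L = l"
  proof (rule ccontr)
    assume "L \<noteq> l"
    then consider "L < l" | "l < L" by linarith
    then show False
    proof cases
      case 1
      have "\<exists>n::int. a < (A + L) + n \<and> (A + L) + n < a + l"
        by (rule exI[of _ "-j"]) (use 1 L Aj in auto)
      then obtain n :: int where "A < A + L + n" "A + L + n < A + L" using M[of "A+L"] by blast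
      then have "- L < real_of_int n" "real_of_int n < 0" by auto
      then have "n \<le> -1" by simp
      then have "real_of_int n \<le> -1" by simp
      then show False using L1 \<open>- L < of_int n\<close> by linarith
    next
      case 2
      have "\<exists>n::int. A < (a + l) + n \<and> (a + l) + n < A + L"
        by (rule exI[of _ "j"]) (use 2 l Aj in auto)
      then obtain n :: int where "a < a + l + n" "a + l + n < a + l" using M[of "a+l"] by blast
      then have "- l < real_of_int n" "real_of_int n < 0" by auto
      then have "n \<le> -1" by simp
      then have "real_of_int n \<le> -1" by simp
      then show False using l \<open>- l < of_int n\<close> by linarith
    qed
  qed
  then show ?thesis using Aj by blast
qed



lemma dy_elim:
  assumes "gen_dyadic s t"
  shows "\<exists>m::nat. \<exists>a b. (a, b) \<in> {(0, 1), (0, 2/3), (1/3, 2/3), (1/3, 1::real)} \<and>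
           (\<exists>k::int. 2^m * (t - s) = b - a \<and> 2^m * s = a + k)"
proof -
  from assms obtain m a b g where st: "s < t" and ab: "(a, b) \<in> {(0, 1), (0, 2/3), (1/3, 2/3), (1/3, 1::real)}"
    and h: "homeomorphism (open_arc s t) (open_arc a b) (sigma2 ^^ m) g"
    unfolding gen_dyadic_def by blast
  have "(sigma2 ^^ m) ` open_arc s t = open_arc a b" using h by (simp add: homeomorphism_def)
  moreover have "(sigma2 ^^ m) ` open_arc s t = circ ` ((\<lambda>x. 2^m * x) ` {s<..<t})"
    unfolding open_arc_def image_image sigma2_circ ..
  moreover have "(\<lambda>x. (2::real)^m * x) ` {s<..<t} = {(2^m* s) <..< (2^m* s + 2^m*(t-s))}"
  proof -
    have "(\<lambda>x. (2::real)^m * x) ` {s<..<t} = {(2^m* s) <..< (2^m*t)}"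
    proof
      show "(\<lambda>x. (2::real)^m * x) ` {s<..<t} \<subseteq> {(2^m * s) <..< (2^m*t)}" by auto
      show "{(2^m * s) <..< (2^m*t)} \<subseteq> (\<lambda>x. (2::real)^m * x) ` {s<..<t}"
      proof
        fix y assume y: "y \<in> {(2^m * s) <..< ((2::real)^m*t)}"
        have "y = 2^m * (y / 2^m)" by simp
        moreover have "y / 2^m \<in> {s<..<t}" using y by (auto simp: field_simps)
        ultimately show "y \<in> (\<lambda>x. (2::real)^m * x) ` {s<..<t}" by blast
      qed
    qed
    then show ?thesis by (simp add: algebra_simps)
  qed
  ultimately have "circ ` {(2^m* s) <..< (2^m* s + 2^m*(t-s))} = circ ` {a <..< (a + (b-a))}"
    unfolding open_arc_def by simp
  note E = this
  have l: "0 < b - a" "b - a \<le> 1" using ab by auto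
  have L: "0 < 2^m*(t-s)" using st by simp
  have "2^m*(t-s) = b - a \<and> (\<exists>k::int. 2^m* s = a + k)"
    by (rule arc_eq[OF E L l])
  then show ?thesis using ab by blast
qed

lemma red_I: assumes "(2::real)^n * x = of_int j" shows "red x"
proof -
  have "(sigma2 ^^ n) (circ x) = circ 0"
    unfolding sigma2_circ assms using circ_add_int[of 0 j] by simp
  then show ?thesis unfolding red_def by blast
qed

lemma blue_I1: assumes "(2::real)^n * x = 1/3 + of_int j" shows "blue x"
proof -
  have "(sigma2 ^^ n) (circ x) = circ (1/3)"
    unfolding sigma2_circ assms using circ_add_int[of "1/3" j] by simp
  then show ?thesis unfolding blue_def by blast
qed

lemma blue_I2: assumes "(2::real)^n * x = 2/3 + of_int j" shows "blue x"
proof -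
  have "(sigma2 ^^ n) (circ x) = circ (2/3)"
    unfolding sigma2_circ assms using circ_add_int[of "2/3" j] by simp
  then show ?thesis unfolding blue_def by blast
qed

lemma red_E: assumes "red x" obtains n j where "(2::real)^n * x = of_int j"
proof -
  from assms obtain n where "circ (2^n * x) = circ 0" unfolding red_def sigma2_circ by blast
  then obtain j :: int where "2^n * x = 0 + real_of_int j" using circ_eq_iff[of "2^n * x" 0] by blast
  then show ?thesis using that by simp
qed


lemma notred: assumes h: "(2::real)^m * s = of_int c/3 + of_int k" and c: "c = 1 \<or> c = 2"
  shows "\<not> red s"
proof
  assume "red s"
  then obtain n j where nj: "(2::real)^n * s = of_int j" by (rule red_E)
  have "(2::real)^n * (2^m * s) = 2^m * (2^n * s)" by simp
  then have "(2::real)^n * (of_int c/3 + of_int k) = 2^m * of_int j" using h nj by simp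
  then have "(2::real)^n * (of_int c + 3 * of_int k) = 3 * (2^m * of_int j)" by (simp add: field_simps)
  then have "real_of_int (2^n * (c + 3 * k)) = real_of_int (3 * (2^m * j))" by simp
  then have e: "(2::int)^n * (c + 3 * k) = 3 * (2^m * j)" by (simp only: of_int_eq_iff)
  have cop: "coprime (3::int) (2^n)"
    by (simp add: coprime_power_right_iff)
  have "(3::int) dvd 2^n * (c + 3 * k)" unfolding e by simp
  then have "(3::int) dvd (c + 3 * k)" using cop by (simp add: coprime_dvd_mult_right_iff)
  then have "(3::int) dvd c" by (simp add: dvd_add_left_iff)
  then show False using c by auto
qed


lemma dy_intro2:
  assumes ab: "(a, b) \<in> {(0, 1), (0, 2/3), (1/3, 2/3), (1/3, 1::real)}"
    and len: "2^m * (t - s) = b - a" and k: "2^m * s = a + of_int k"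
  shows "gen_dyadic s t"
proof (rule dy_intro[OF _ _ ab len k])
  have P1: "(1::real) \<le> 2^m" by simp
  have ba: "0 < b - a" "b - a \<le> 1" using ab by auto
  have e: "t - s = (b - a) / 2^m" using len by (simp add: field_simps)
  have "0 < (b - a) / 2^m" using ba by simp
  then show "s < t" using e by linarith
  have "b - a \<le> 2^m" using ba P1 by linarith
  then have "(b - a) / 2^m \<le> 1" by (simp add: divide_le_eq)
  then show "t - s \<le> 1" using e by simp
qed

theorem lemma7p2:
  fixes s t :: real
  assumes "gen_dyadic s t"
  shows "(\<exists>x. s < x \<and> x < t \<and> red x \<and> gen_dyadic s x \<and> gen_dyadic x t)
       \<and> ((red s \<or> red t) \<longrightarrow>
            (\<exists>x. s < x \<and> x < t \<and> blue x \<and> gen_dyadic s x \<and> gen_dyadic x t))"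
proof -
  obtain m a b k where ab: "(a, b) \<in> {(0, 1), (0, 2/3), (1/3, 2/3), (1/3, 1::real)}"
    and hl: "2^m * (t - s) = b - a" and hs: "2^m * s = a + of_int k"
    using dy_elim[OF assms] by blast
  have P1: "(1::real) \<le> 2^m" by simp
  have P0: "(0::real) < 2^m" by simp
  have P2a: "(1::real) \<le> 2*2^m" using P1 by linarith
  have P2b: "(1::real) \<le> 2^m*2" using P1 by linarith
  have P4a: "(1::real) \<le> 4*2^m" using P1 by linarith
  have P4b: "(1::real) \<le> 2^m*4" using P1 by linarith
  note P2 = P2a P2b and P4 = P4a P4b
  have sE: "s = (a + of_int k) / 2^m" using hs P0 by (simp add: field_simps)
  have tE: "t = (b + of_int k) / 2^m" using hs hl P0 by (simp add: field_simps)
  from ab consider "a = 0" "b = 1" | "a = 0" "b = 2/3" | "a = 1/3" "b = 2/3" | "a = 1/3" "b = 1" by auto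
  then show ?thesis
  proof cases
    case 1
    then have s': "s = (of_int k / 2^m)" and t': "t = ((of_int k + 1) / 2^m)" using sE tE by simp_all
    define xr where "xr = (of_int k + 1/2) / (2::real)^m"
    have R: "(\<exists>xr. s < xr \<and> xr < t \<and> red xr \<and> gen_dyadic s xr \<and> gen_dyadic xr t)"
    proof (intro exI[of _ xr] conjI)
      show "s < xr" "xr < t" unfolding xr_def s' t' using P0 by (simp_all add: field_simps)
      show "red xr" by (rule red_I[of "m+1" xr "2*k+1"]) (use P0 in \<open>simp add: xr_def field_simps power_add\<close>)
      show "gen_dyadic s xr"
        by (rule dy_intro2[of "0" "1" "m+1" xr s "2*k"]) (use P0 in \<open>simp_all add: s' xr_def field_simps power_add\<close>)
      show "gen_dyadic xr t"
        by (rule dy_intro2[of "0" "1" "m+1" t xr "2*k+1"]) (use P0 in \<open>simp_all add: t' xr_def field_simps power_add\<close>)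
    qed
    define xb where "xb = (of_int k + 2/3) / (2::real)^m"
    have B: "(\<exists>xb. s < xb \<and> xb < t \<and> blue xb \<and> gen_dyadic s xb \<and> gen_dyadic xb t)"
    proof (intro exI[of _ xb] conjI)
      show "s < xb" "xb < t" unfolding xb_def s' t' using P0 by (simp_all add: field_simps)
      show "blue xb" by (rule blue_I2[of "m" xb "k"]) (use P0 in \<open>simp add: xb_def field_simps power_add\<close>)
      show "gen_dyadic s xb"
        by (rule dy_intro2[of "0" "2/3" "m" xb s "k"]) (use P0 in \<open>simp_all add: s' xb_def field_simps power_add\<close>)
      show "gen_dyadic xb t"
        by (rule dy_intro2[of "1/3" "1" "m+1" t xb "2*k+1"]) (use P0 in \<open>simp_all add: t' xb_def field_simps power_add\<close>)
    qed
    show ?thesis using R B by blast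
  next
    case 2
    then have s': "s = (of_int k / 2^m)" and t': "t = ((of_int k + 2/3) / 2^m)" using sE tE by simp_all
    define xr where "xr = (of_int k + 1/2) / (2::real)^m"
    have R: "(\<exists>xr. s < xr \<and> xr < t \<and> red xr \<and> gen_dyadic s xr \<and> gen_dyadic xr t)"
    proof (intro exI[of _ xr] conjI)
      show "s < xr" "xr < t" unfolding xr_def s' t' using P0 by (simp_all add: field_simps)
      show "red xr" by (rule red_I[of "m+1" xr "2*k+1"]) (use P0 in \<open>simp add: xr_def field_simps power_add\<close>)
      show "gen_dyadic s xr"
        by (rule dy_intro2[of "0" "1" "m+1" xr s "2*k"]) (use P0 in \<open>simp_all add: s' xr_def field_simps power_add\<close>)
      show "gen_dyadic xr t"
        by (rule dy_intro2[of "0" "2/3" "m+2" t xr "4*k+2"]) (use P0 in \<open>simp_all add: t' xr_def field_simps power_add\<close>)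
    qed
    define xb where "xb = (of_int k + 1/3) / (2::real)^m"
    have B: "(\<exists>xb. s < xb \<and> xb < t \<and> blue xb \<and> gen_dyadic s xb \<and> gen_dyadic xb t)"
    proof (intro exI[of _ xb] conjI)
      show "s < xb" "xb < t" unfolding xb_def s' t' using P0 by (simp_all add: field_simps)
      show "blue xb" by (rule blue_I1[of "m" xb "k"]) (use P0 in \<open>simp add: xb_def field_simps power_add\<close>)
      show "gen_dyadic s xb"
        by (rule dy_intro2[of "0" "2/3" "m+1" xb s "2*k"]) (use P0 in \<open>simp_all add: s' xb_def field_simps power_add\<close>)
      show "gen_dyadic xb t"
        by (rule dy_intro2[of "1/3" "2/3" "m" t xb "k"]) (use P0 in \<open>simp_all add: t' xb_def field_simps power_add\<close>)
    qed
    show ?thesis using R B by blast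
  next
    case 3
    then have s': "s = ((of_int k + 1/3) / 2^m)" and t': "t = ((of_int k + 2/3) / 2^m)" using sE tE by simp_all
    define xr where "xr = (of_int k + 1/2) / (2::real)^m"
    have R: "(\<exists>xr. s < xr \<and> xr < t \<and> red xr \<and> gen_dyadic s xr \<and> gen_dyadic xr t)"
    proof (intro exI[of _ xr] conjI)
      show "s < xr" "xr < t" unfolding xr_def s' t' using P0 by (simp_all add: field_simps)
      show "red xr" by (rule red_I[of "m+1" xr "2*k+1"]) (use P0 in \<open>simp add: xr_def field_simps power_add\<close>)
      show "gen_dyadic s xr"
        by (rule dy_intro2[of "1/3" "1" "m+2" xr s "4*k+1"]) (use P0 in \<open>simp_all add: s' xr_def field_simps power_add\<close>)
      show "gen_dyadic xr t"
        by (rule dy_intro2[of "0" "2/3" "m+2" t xr "4*k+2"]) (use P0 in \<open>simp_all add: t' xr_def field_simps power_add\<close>)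
    qed
    have "\<not> red s" by (rule notred[of m s 1 k]) (use P0 in \<open>simp_all add: s' field_simps\<close>)
    moreover have "\<not> red t" by (rule notred[of m t 2 k]) (use P0 in \<open>simp_all add: t' field_simps\<close>)
    ultimately show ?thesis using R by blast
  next
    case 4
    then have s': "s = ((of_int k + 1/3) / 2^m)" and t': "t = ((of_int k + 1) / 2^m)" using sE tE by simp_all
    define xr where "xr = (of_int k + 1/2) / (2::real)^m"
    have R: "(\<exists>xr. s < xr \<and> xr < t \<and> red xr \<and> gen_dyadic s xr \<and> gen_dyadic xr t)"
    proof (intro exI[of _ xr] conjI)
      show "s < xr" "xr < t" unfolding xr_def s' t' using P0 by (simp_all add: field_simps)
      show "red xr" by (rule red_I[of "m+1" xr "2*k+1"]) (use P0 in \<open>simp add: xr_def field_simps power_add\<close>)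
      show "gen_dyadic s xr"
        by (rule dy_intro2[of "1/3" "1" "m+2" xr s "4*k+1"]) (use P0 in \<open>simp_all add: s' xr_def field_simps power_add\<close>)
      show "gen_dyadic xr t"
        by (rule dy_intro2[of "0" "1" "m+1" t xr "2*k+1"]) (use P0 in \<open>simp_all add: t' xr_def field_simps power_add\<close>)
    qed
    define xb where "xb = (of_int k + 2/3) / (2::real)^m"
    have B: "(\<exists>xb. s < xb \<and> xb < t \<and> blue xb \<and> gen_dyadic s xb \<and> gen_dyadic xb t)"
    proof (intro exI[of _ xb] conjI)
      show "s < xb" "xb < t" unfolding xb_def s' t' using P0 by (simp_all add: field_simps)
      show "blue xb" by (rule blue_I2[of "m" xb "k"]) (use P0 in \<open>simp add: xb_def field_simps power_add\<close>)
      show "gen_dyadic s xb"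
        by (rule dy_intro2[of "1/3" "2/3" "m" xb s "k"]) (use P0 in \<open>simp_all add: s' xb_def field_simps power_add\<close>)
      show "gen_dyadic xb t"
        by (rule dy_intro2[of "1/3" "1" "m+1" t xb "2*k+1"]) (use P0 in \<open>simp_all add: t' xb_def field_simps power_add\<close>)
    qed
    show ?thesis using R B by blast
  qed
qed

end
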